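(* Let $m,v,x,y$ be nonzero real numbers, let $w\geq 0$ and let $u\in\mathbb{R}$. Let $\mathfrak{n}$ be the five-dimensional real Lie algebra with basis $\{E_1,\dots,E_5\}$ whose only non-vanishing brackets (up to antisymmetry) are $$[E_1,E_2]=mE_3+uE_5,\qquad [E_1,E_3]=vE_4+wE_5,\qquad [E_1,E_4]=xE_5,\qquad [E_2,E_3]=yE_5.$$ Equip the corresponding simply connected nilpotent Lie group with the left-invariant Riemannian metric for which $\{E_1,\dots,E_5\}$ is orthonormal. Then this metric is an algebraic Ricci soliton if and only if $$u=w=0,\qquad m^2=v^2=\tfrac32x^2,\qquad y^2=x^2.$$ In that case $$c=-\tfrac{11}4x^2,\qquad D=\mathrm{diag}\big(\tfrac34x^2,\tfrac32x^2,\tfrac94x^2,3x^2,\tfrac{15}4x^2\big),$$ where $D$ is written as a matrix with respect to the basis $\{E_1,\dots,E_5\}$.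
   Context: Let $G$ be a Lie group with Lie algebra $\mathfrak{g}$ and let $g$ be a left-invariant Riemannian metric on $G$. Let $\mathrm{Ric}$ denote the $(1,1)$ Ricci tensor of $g$, viewed as a linear endomorphism of $\mathfrak{g}$. The metric $g$ is an algebraic Ricci soliton if there are a real number $c$ and a derivation $D$ of $\mathfrak{g}$ such that $\mathrm{Ric}=c\,\mathrm{Id}+D$. The notation $\mathrm{diag}(a_1,\dots,a_5)$ denotes the diagonal matrix with these entries. *)

theory Defs
  imports "HOL-Analysis.Analysis"
begin

text \<open>A finite-dimensional real Lie algebra is identified with real^'n, the given
basis E_1..E_n being the standard basis (axis i 1). The left-invariant metric in
which this basis is orthonormal is then the standard inner product. All geometric quantities below are those of left-invariant
vector fields (the Lie algebra).\<close>

definition E :: "'n::finite \<Rightarrow> real^'n" where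
  "E i = axis i 1"

text \<open>Metric adjoint of ad_X: inner (ad_adj B X Y) Z = inner Y (B X Z).\<close>
definition ad_adj :: "(real^'n \<Rightarrow> real^'n \<Rightarrow> real^'n) \<Rightarrow> real^'n \<Rightarrow> real^'n \<Rightarrow> real^'n::finite" where
  "ad_adj B X Y = (\<chi> i. inner Y (B X (E i)))"

text \<open>Levi-Civita connection on left-invariant fields (Koszul formula).\<close>
definition LC :: "(real^'n \<Rightarrow> real^'n \<Rightarrow> real^'n) \<Rightarrow> real^'n \<Rightarrow> real^'n \<Rightarrow> real^'n::finite" where
  "LC B X Y = (1/2) *\<^sub>R (B X Y - ad_adj B X Y - ad_adj B Y X)"

definition curv :: "(real^'n \<Rightarrow> real^'n \<Rightarrow> real^'n) \<Rightarrow> real^'n \<Rightarrow> real^'n \<Rightarrow> real^'n \<Rightarrow> real^'n::finite" where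
  "curv B X Y Z = LC B X (LC B Y Z) - LC B Y (LC B X Z) - LC B (B X Y) Z"

definition ric :: "(real^'n \<Rightarrow> real^'n \<Rightarrow> real^'n) \<Rightarrow> real^'n \<Rightarrow> real^'n \<Rightarrow> real" where
  "ric B X Y = (\<Sum>i\<in>UNIV. inner (curv B (E i) X Y) (E (i::'n::finite)))"

definition Ric :: "(real^'n \<Rightarrow> real^'n \<Rightarrow> real^'n) \<Rightarrow> real^'n \<Rightarrow> real^'n::finite" where
  "Ric B X = (\<chi> j. ric B X (E j))"

definition is_derivation :: "(real^'n \<Rightarrow> real^'n \<Rightarrow> real^'n) \<Rightarrow> (real^'n \<Rightarrow> real^'n::finite) \<Rightarrow> bool" where
  "is_derivation B D \<longleftrightarrow> linear D \<and> (\<forall>X Y. D (B X Y) = B (D X) Y + B X (D Y))"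

definition algebraic_ricci_soliton ::
  "(real^'n \<Rightarrow> real^'n \<Rightarrow> real^'n) \<Rightarrow> real \<Rightarrow> (real^'n \<Rightarrow> real^'n::finite) \<Rightarrow> bool" where
  "algebraic_ricci_soliton B c D \<longleftrightarrow> is_derivation B D \<and> (\<forall>X. Ric B X = c *\<^sub>R X + D X)"

text \<open>The five-dimensional algebra: indices 1,2,3,4,5 of type 5 (note 5 = 0 in type 5,
still distinct from 1..4). Bilinear extension of
[E1,E2]=mE3+uE5, [E1,E3]=vE4+wE5, [E1,E4]=xE5, [E2,E3]=yE5.\<close>
definition brk5 :: "real \<Rightarrow> real \<Rightarrow> real \<Rightarrow> real \<Rightarrow> real \<Rightarrow> real \<Rightarrow> real^5 \<Rightarrow> real^5 \<Rightarrow> real^5" where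
  "brk5 m u v w x y X Y = (\<chi> k.
      if k = 3 then m * (X$1 * Y$2 - X$2 * Y$1)
      else if k = 4 then v * (X$1 * Y$3 - X$3 * Y$1)
      else if k = 5 then u * (X$1 * Y$2 - X$2 * Y$1) + w * (X$1 * Y$3 - X$3 * Y$1)
                       + x * (X$1 * Y$4 - X$4 * Y$1) + y * (X$2 * Y$3 - X$3 * Y$2)
      else 0)"

definition diag5 :: "real \<Rightarrow> real \<Rightarrow> real \<Rightarrow> real \<Rightarrow> real \<Rightarrow> real^5 \<Rightarrow> real^5" where
  "diag5 a1 a2 a3 a4 a5 X = (\<chi> k.
      (if k = 1 then a1 else if k = 2 then a2 else if k = 3 then a3 else if k = 4 then a4 else a5) * X$k)"

end

theory Submission
  imports Defs
begin

lemma exhaust_5: fixes x :: 5 shows "x = 1 \<or> x = 2 \<or> x = 3 \<or> x = 4 \<or> x = 5"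
proof (induct x)
  case (of_int z)
  then have "z = 0 \<or> z = 1 \<or> z = 2 \<or> z = 3 \<or> z = 4" by fastforce
  then show ?case by auto
qed
lemma forall_5: "(\<forall>i::5. P i) \<longleftrightarrow> P 1 \<and> P 2 \<and> P 3 \<and> P 4 \<and> P 5"
  by (metis exhaust_5)
lemma UNIV_5: "UNIV = {1, 2, 3, 4, 5::5}"
  using exhaust_5 by auto
lemma sum_5: "sum f (UNIV::5 set) = f 1 + f 2 + f 3 + f 4 + f 5"
  unfolding UNIV_5 by (simp add: ac_simps)

lemma E_nth: "E i $ k = (if k = i then 1 else 0)" by (simp add: E_def axis_def)
lemma inner5: "inner (X::real^5) Y = X$1 * Y$1 + X$2 * Y$2 + X$3 * Y$3 + X$4 * Y$4 + X$5 * Y$5"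
  by (simp add: inner_vec_def sum_5)
lemma brk_nth: "brk5 m u v w x y X Y $ k = (if k = 3 then m * (X$1 * Y$2 - X$2 * Y$1)
      else if k = 4 then v * (X$1 * Y$3 - X$3 * Y$1)
      else if k = 5 then u * (X$1 * Y$2 - X$2 * Y$1) + w * (X$1 * Y$3 - X$3 * Y$1)
                       + x * (X$1 * Y$4 - X$4 * Y$1) + y * (X$2 * Y$3 - X$3 * Y$2)
      else 0)" by (simp add: brk5_def)
lemma adj_nth: "ad_adj B X Y $ i = inner Y (B X (E i))" by (simp add: ad_adj_def)
lemma LC_nth: "LC B X Y $ k = 1/2 * (B X Y $ k - ad_adj B X Y $ k - ad_adj B Y X $ k)"
  by (simp add: LC_def)
lemma curv_nth: "curv B X Y Z $ k = LC B X (LC B Y Z) $ k - LC B Y (LC B X Z) $ k - LC B (B X Y) Z $ k"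
  by (simp add: curv_def)
lemma ric5: "ric (B::real^5\<Rightarrow>real^5\<Rightarrow>real^5) X Y = curv B (E 1) X Y $ 1 + curv B (E 2) X Y $ 2
   + curv B (E 3) X Y $ 3 + curv B (E 4) X Y $ 4 + curv B (E 5) X Y $ 5"
  by (simp add: ric_def sum_5 inner5 E_nth)

lemma LC_1: "LC (brk5 m u v w x y) X Y $ 1 = (m * (X$2 * Y$3 + X$3 * Y$2) + v * (X$3 * Y$4 + X$4 * Y$3) + u * (X$2 * Y$5 + X$5 * Y$2) + w * (X$3 * Y$5 + X$5 * Y$3) + x * (X$4 * Y$5 + X$5 * Y$4)) / 2"
  by (simp add: LC_nth brk_nth adj_nth inner5 E_nth; simp add: field_simps)
lemma LC_2: "LC (brk5 m u v w x y) X Y $ 2 = (- m * (X$1 * Y$3 + X$3 * Y$1) - u * (X$1 * Y$5 + X$5 * Y$1) + y * (X$3 * Y$5 + X$5 * Y$3)) / 2"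
  by (simp add: LC_nth brk_nth adj_nth inner5 E_nth; simp add: field_simps)
lemma LC_3: "LC (brk5 m u v w x y) X Y $ 3 = (m * (X$1 * Y$2 - X$2 * Y$1) - v * (X$1 * Y$4 + X$4 * Y$1) - w * (X$1 * Y$5 + X$5 * Y$1) - y * (X$2 * Y$5 + X$5 * Y$2)) / 2"
  by (simp add: LC_nth brk_nth adj_nth inner5 E_nth; simp add: field_simps)
lemma LC_4: "LC (brk5 m u v w x y) X Y $ 4 = (v * (X$1 * Y$3 - X$3 * Y$1) - x * (X$1 * Y$5 + X$5 * Y$1)) / 2"
  by (simp add: LC_nth brk_nth adj_nth inner5 E_nth; simp add: field_simps)
lemma LC_5: "LC (brk5 m u v w x y) X Y $ 5 = (u * (X$1 * Y$2 - X$2 * Y$1) + w * (X$1 * Y$3 - X$3 * Y$1) + x * (X$1 * Y$4 - X$4 * Y$1) + y * (X$2 * Y$3 - X$3 * Y$2)) / 2"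
  by (simp add: LC_nth brk_nth adj_nth inner5 E_nth; simp add: field_simps)

lemmas cs = ric5 curv_nth LC_1 LC_2 LC_3 LC_4 LC_5 brk_nth E_nth


lemma Ric_1: "Ric (brk5 m u v w x y) X $ 1 = X$1 * (-(m^2+u^2+v^2+w^2+x^2)/2) + X$2 * (-w * y/2) + X$3 * (u * y/2)"
  unfolding Ric_def vec_lambda_beta by (simp add: cs; simp add: field_simps power2_eq_square)
lemma Ric_2: "Ric (brk5 m u v w x y) X $ 2 = X$1 * (-w * y/2) + X$2 * (-(m^2+u^2+y^2)/2) + X$3 * (-u * w/2) + X$4 * (-u * x/2)"
  unfolding Ric_def vec_lambda_beta by (simp add: cs; simp add: field_simps power2_eq_square)
lemma Ric_3: "Ric (brk5 m u v w x y) X $ 3 = X$1 * (u * y/2) + X$2 * (-u * w/2) + X$3 * ((m^2 - v^2-w^2-y^2)/2) + X$4 * (-w * x/2) + X$5 * (m * u/2)"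
  unfolding Ric_def vec_lambda_beta by (simp add: cs; simp add: field_simps power2_eq_square)
lemma Ric_4: "Ric (brk5 m u v w x y) X $ 4 = X$2 * (-u * x/2) + X$3 * (-w * x/2) + X$4 * ((v^2-x^2)/2) + X$5 * (v * w/2)"
  unfolding Ric_def vec_lambda_beta by (simp add: cs; simp add: field_simps power2_eq_square)
lemma Ric_5: "Ric (brk5 m u v w x y) X $ 5 = X$3 * (m * u/2) + X$4 * (v * w/2) + X$5 * ((u^2+w^2+x^2+y^2)/2)"
  unfolding Ric_def vec_lambda_beta by (simp add: cs; simp add: field_simps power2_eq_square)

lemma Dnth: assumes "\<forall>X. Ric B X = c *\<^sub>R X + D X" shows "D X $ j = Ric B X $ j - c * X $ j"
proof -
  have "Ric B X = c *\<^sub>R X + D X" using assms by blast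
  then have "D X = Ric B X - c *\<^sub>R X" by (simp add: algebra_simps)
  then show ?thesis by simp
qed

lemmas rs = Ric_1 Ric_2 Ric_3 Ric_4 Ric_5 brk_nth E_nth

lemma fwd:
  fixes m u v w x y :: real
  assumes "m \<noteq> 0" "v \<noteq> 0" "x \<noteq> 0" "y \<noteq> 0"
  and sol: "algebraic_ricci_soliton (brk5 m u v w x y) c D"
  shows "u = 0 \<and> w = 0 \<and> m^2 = 3/2 * x^2 \<and> v^2 = 3/2 * x^2 \<and> y^2 = x^2 \<and> c = -(11/4) * x^2"
proof -
  let ?B = "brk5 m u v w x y"
  have der: "\<And>X Y. D (?B X Y) = ?B (D X) Y + ?B X (D Y)" and ricd: "\<forall>X. Ric ?B X = c *\<^sub>R X + D X"
    using sol by (auto simp: algebraic_ricci_soliton_def is_derivation_def)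
  note DD = Dnth[OF ricd]
  have "D (?B (E 1) (E 4)) $ 3 = (?B (D (E 1)) (E 4) + ?B (E 1) (D (E 4))) $ 3" using der by simp
  then have "m * u * x = 0" by (simp add: DD rs)
  then have u0: "u = 0" using assms by simp
  have "D (?B (E 1) (E 4)) $ 4 = (?B (D (E 1)) (E 4) + ?B (E 1) (D (E 4))) $ 4" using der by simp
  then have "v * w * x = 0" by (simp add: DD rs u0)
  then have w0: "w = 0" using assms by simp
  have "D (?B (E 1) (E 2)) $ 3 = (?B (D (E 1)) (E 2) + ?B (E 1) (D (E 2))) $ 3" using der by simp
  then have "m * ((m^2 - v^2 - y^2)/2 - c - ((-(m^2+v^2+x^2)/2 - c) + (-(m^2+y^2)/2 - c))) = 0"
    by (simp add: DD rs u0 w0 field_simps)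
  then have e1: "(m^2 - v^2 - y^2)/2 - c = (-(m^2+v^2+x^2)/2 - c) + (-(m^2+y^2)/2 - c)"
    using assms by simp
  have "D (?B (E 1) (E 3)) $ 4 = (?B (D (E 1)) (E 3) + ?B (E 1) (D (E 3))) $ 4" using der by simp
  then have "v * ((v^2 - x^2)/2 - c - ((-(m^2+v^2+x^2)/2 - c) + ((m^2 - v^2 - y^2)/2 - c))) = 0"
    by (simp add: DD rs u0 w0 field_simps)
  then have e2: "(v^2 - x^2)/2 - c = (-(m^2+v^2+x^2)/2 - c) + ((m^2 - v^2 - y^2)/2 - c)"
    using assms by simp
  have "D (?B (E 1) (E 4)) $ 5 = (?B (D (E 1)) (E 4) + ?B (E 1) (D (E 4))) $ 5" using der by simp
  then have "x * ((x^2 + y^2)/2 - c - ((-(m^2+v^2+x^2)/2 - c) + ((v^2 - x^2)/2 - c))) = 0"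
    by (simp add: DD rs u0 w0 field_simps)
  then have e3: "(x^2 + y^2)/2 - c = (-(m^2+v^2+x^2)/2 - c) + ((v^2 - x^2)/2 - c)"
    using assms by simp
  have "D (?B (E 2) (E 3)) $ 5 = (?B (D (E 2)) (E 3) + ?B (E 2) (D (E 3))) $ 5" using der by simp
  then have "y * ((x^2 + y^2)/2 - c - ((-(m^2+y^2)/2 - c) + ((m^2 - v^2 - y^2)/2 - c))) = 0"
    by (simp add: DD rs u0 w0 field_simps)
  then have e4: "(x^2 + y^2)/2 - c = (-(m^2+y^2)/2 - c) + ((m^2 - v^2 - y^2)/2 - c)"
    using assms by simp
  have a: "3*m^2 + x^2 + 2*c = 0" using e1 by (simp add: field_simps)
  have b: "3 * v^2 + y^2 + 2*c = 0" using e2 by (simp add: field_simps)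
  have d: "m^2 + 3*x^2 + y^2 + 2*c = 0" using e3 by (simp add: field_simps)
  have f: "v^2 + x^2 + 3*y^2 + 2*c = 0" using e4 by (simp add: field_simps)
  have "y^2 = x^2" using a b d f by linarith
  moreover have "m^2 = 3/2 * x^2" using a b d f by linarith
  moreover have "v^2 = 3/2 * x^2" using a b d f by linarith
  moreover have "c = -(11/4) * x^2" using a b d f by linarith
  ultimately show ?thesis using u0 w0 by simp
qed

lemma diag_nth: "diag5 a1 a2 a3 a4 a5 X $ k = (if k = 1 then a1 else if k = 2 then a2 else if k = 3 then a3 else if k = 4 then a4 else a5) * X$k"
  by (simp add: diag5_def)

lemma bwd:
  fixes m u v w x y :: real
  assumes "u = 0" "w = 0" "m^2 = 3/2 * x^2" "v^2 = 3/2 * x^2" "y^2 = x^2"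
  shows "algebraic_ricci_soliton (brk5 m u v w x y) (-(11/4) * x^2) (diag5 (3/4 * x^2) (3/2 * x^2) (9/4 * x^2) (3 * x^2) (15/4 * x^2))"
proof -
  let ?B = "brk5 m u v w x y"
  let ?D = "diag5 (3/4 * x^2) (3/2 * x^2) (9/4 * x^2) (3 * x^2) (15/4 * x^2)"
  have lin: "linear ?D"
    by (rule linearI) (simp_all add: vec_eq_iff diag_nth algebra_simps)
  have der: "\<forall>X Y. ?D (?B X Y) = ?B (?D X) Y + ?B X (?D Y)"
    using assms by (simp add: vec_eq_iff forall_5 diag_nth brk_nth algebra_simps)
  have ric: "\<forall>X. Ric ?B X = (-(11/4) * x^2) *\<^sub>R X + ?D X"
    using assms(1,2) by (simp add: vec_eq_iff forall_5 diag_nth rs assms(3-5) algebra_simps)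
  show ?thesis using lin der ric by (simp add: algebraic_ricci_soliton_def is_derivation_def)
qed

lemma uniqD:
  fixes m u v w x y :: real
  assumes "m \<noteq> 0" "v \<noteq> 0" "x \<noteq> 0" "y \<noteq> 0"
  and s: "algebraic_ricci_soliton (brk5 m u v w x y) c D"
  shows "D = diag5 (3/4 * x^2) (3/2 * x^2) (9/4 * x^2) (3 * x^2) (15/4 * x^2)"
proof -
  have h: "u = 0" "w = 0" "m^2 = 3/2 * x^2" "v^2 = 3/2 * x^2" "y^2 = x^2" "c = -(11/4) * x^2"
    using fwd[OF assms(1-4) s] by auto
  have ricd: "\<forall>X. Ric (brk5 m u v w x y) X = c *\<^sub>R X + D X"
    using s by (simp add: algebraic_ricci_soliton_def)
  have DD: "D X $ j = Ric (brk5 m u v w x y) X $ j - c * X $ j" for X j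
    using Dnth[OF ricd] .
  have "D X = diag5 (3/4 * x^2) (3/2 * x^2) (9/4 * x^2) (3 * x^2) (15/4 * x^2) X" for X
    unfolding vec_eq_iff forall_5 diag_nth DD rs h(1,2,3,4,5,6) by (simp add: algebra_simps)
  then show ?thesis by (rule ext)
qed

theorem mainTheorem6:
  fixes m u v w x y :: real
  assumes "m \<noteq> 0" "v \<noteq> 0" "x \<noteq> 0" "y \<noteq> 0" "w \<ge> 0"
  shows "((\<exists>c D. algebraic_ricci_soliton (brk5 m u v w x y) c D) \<longleftrightarrow>
            (u = 0 \<and> w = 0 \<and> m^2 = 3/2 * x^2 \<and> v^2 = 3/2 * x^2 \<and> y^2 = x^2))
       \<and> (\<forall>c D. algebraic_ricci_soliton (brk5 m u v w x y) c D \<longrightarrow>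
            c = -(11/4) * x^2 \<and>
            D = diag5 (3/4 * x^2) (3/2 * x^2) (9/4 * x^2) (3 * x^2) (15/4 * x^2))"
proof -
  let ?B = "brk5 m u v w x y"
  have iff: "(\<exists>c D. algebraic_ricci_soliton ?B c D) \<longleftrightarrow>
            (u = 0 \<and> w = 0 \<and> m^2 = 3/2 * x^2 \<and> v^2 = 3/2 * x^2 \<and> y^2 = x^2)"
    using fwd[OF assms(1-4)] bwd by blast
  have uniq: "algebraic_ricci_soliton ?B c D \<longrightarrow> c = -(11/4) * x^2 \<and>
            D = diag5 (3/4 * x^2) (3/2 * x^2) (9/4 * x^2) (3 * x^2) (15/4 * x^2)" for c D
    using fwd[OF assms(1-4)] uniqD[OF assms(1-4)] by blast
  show ?thesis using iff uniq by blast
qed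

thm_deps mainTheorem6

end
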